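(* Let $A,B\subseteq\mathbb{N}$ be such that $\lim_{n\to\infty}\frac{B(n)-A(n)}{n}$ exists and is $>0$. Then there is a set $D$ with $A\cap B\subseteq D\subseteq B$ and $\lim_{n\to\infty}\frac{D(n)-A(n)}{n}=0$. In particular, $B\setminus D\in\mathcal{D}$.
   Context: $\mathbb{N}=\{1,2,3,\dots\}$. For $A\subseteq\mathbb{N}$ let $A(n)=|A\cap[1,n]|$. Let $\mathcal{D}$ be the collection of all $A\subseteq\mathbb{N}$ for which the asymptotic density $d(A)=\lim_{n\to\infty}\frac{A(n)}{n}$ exists. *)

theory Defs
  imports Complex_Main
begin

definition cnt :: "nat set \<Rightarrow> nat \<Rightarrow> nat" where
  "cnt A n = card (A \<inter> {1..n})"

definition dens_sets :: "nat set set" where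
  "dens_sets = {A. A \<subseteq> {1..} \<and> (\<exists>d. (\<lambda>n. real (cnt A n) / real n) \<longlonglongrightarrow> d)}"

end

theory Submission
  imports Defs
begin

lemma cnt_0[simp]: "cnt X 0 = 0"
  by (simp add: cnt_def)

lemma cnt_Suc: "cnt X (Suc n) = cnt X n + (if Suc n \<in> X then 1 else 0)"
proof -
  have e: "X \<inter> {1..Suc n} = (if Suc n \<in> X then insert (Suc n) (X \<inter> {1..n}) else X \<inter> {1..n})"
    using le_Suc_eq by auto
  show ?thesis unfolding cnt_def e by auto
qed

lemma cnt_mono_set: "R \<subseteq> B \<Longrightarrow> cnt (B - R) n = cnt B n - cnt R n"
  unfolding cnt_def
proof -
  assume "R \<subseteq> B"
  have "(B - R) \<inter> {1..n} = (B \<inter> {1..n}) - (R \<inter> {1..n})" by auto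
  moreover have "R \<inter> {1..n} \<subseteq> B \<inter> {1..n}" using \<open>R \<subseteq> B\<close> by auto
  ultimately show "card ((B - R) \<inter> {1..n}) = card (B \<inter> {1..n}) - card (R \<inter> {1..n})"
    by (simp add: card_Diff_subset)
qed

lemma cnt_le: "R \<subseteq> B \<Longrightarrow> cnt R n \<le> cnt B n"
  unfolding cnt_def by (intro card_mono) auto

lemma max_lim:
  fixes g :: "nat \<Rightarrow> real"
  assumes g: "(\<lambda>n. g n / real n) \<longlonglongrightarrow> c" and c: "c > 0"
  shows "(\<lambda>n. Max (g ` {..n}) / real n) \<longlonglongrightarrow> c"
proof (rule LIMSEQ_I)
  fix r :: real assume r: "r > 0"
  define M where "M n = Max (g ` {..n})" for n
  have Mge: "g m \<le> M n" if "m \<le> n" for m n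
    unfolding M_def using that by (intro Max_ge) auto
  obtain N1 where N1: "\<And>n. n \<ge> N1 \<Longrightarrow> \<bar>g n / real n - c\<bar> < r/2"
    using LIMSEQ_D[OF g, of "r/2"] r by auto
  define K where "K = M N1"
  obtain N2 :: nat where N2: "real N2 > \<bar>K\<bar> * 2 / r" using reals_Archimedean2 by blast
  show "\<exists>no. \<forall>n\<ge>no. norm (M n / real n - c) < r"
  proof (intro exI[of _ "N1 + N2 + 1"] allI impI)
    fix n assume n: "N1 + N2 + 1 \<le> n"
    hence npos: "real n > 0" by simp
    have lo: "g n / real n > c - r/2"
    proof -
      have "\<bar>g n / real n - c\<bar> < r/2" using N1[of n] n by auto
      thus ?thesis by linarith
    qed
    have "g n \<le> M n" using Mge by auto
    hence "g n / real n \<le> M n / real n" using npos by (simp add: divide_right_mono)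
    with lo have low: "M n / real n > c - r" using r by linarith
    have upb: "g m \<le> max K ((c + r/2) * real n)" if "m \<le> n" for m
    proof (cases "m \<le> N1")
      case True then show ?thesis using Mge[of m N1] K_def by auto
    next
      case False
      hence mpos: "real m > 0" by simp
      have "g m / real m < c + r/2"
      proof -
        have "\<bar>g m / real m - c\<bar> < r/2" using N1[of m] False by auto
        thus ?thesis by linarith
      qed
      hence "g m < (c + r/2) * real m" using mpos by (simp add: divide_less_eq)
      also have "\<dots> \<le> (c + r/2) * real n" using that c r by (intro mult_left_mono) auto
      finally show ?thesis by auto
    qed
    have "M n \<le> max K ((c + r/2) * real n)"
      unfolding M_def using upb by (intro Max.boundedI) auto
    moreover have "(c + r/2) * real n \<ge> 0" using c r by simp
    ultimately have "M n \<le> \<bar>K\<bar> + (c + r/2) * real n" by linarith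
    hence "M n / real n \<le> (\<bar>K\<bar> + (c + r/2) * real n) / real n" using npos
      by (simp add: divide_right_mono)
    also have "\<dots> = \<bar>K\<bar> / real n + (c + r/2)" using npos by (simp add: field_simps)
    also have "\<bar>K\<bar> / real n < r/2"
    proof -
      have "real n > \<bar>K\<bar> * 2 / r" using N2 n by auto
      hence "\<bar>K\<bar> * 2 / r * r < real n * r" using r by (intro mult_strict_right_mono) auto
      hence "\<bar>K\<bar> * 2 < real n * r" using r by simp
      thus ?thesis using npos by (simp add: divide_less_eq field_simps)
    qed
    hence "\<bar>K\<bar> / real n + (c + r/2) < c + r" by linarith
    finally have "M n / real n < c + r" by simp
    with low show "norm (M n / real n - c) < r" by auto
  qed
qed

theorem lemma3p13:
  fixes A B :: "nat set"
  assumes "A \<subseteq> {1..}" and "B \<subseteq> {1..}"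
    and "(\<lambda>n. (real (cnt B n) - real (cnt A n)) / real n) \<longlonglongrightarrow> c"
    and "c > 0"
  shows "\<exists>D. A \<inter> B \<subseteq> D \<and> D \<subseteq> B
           \<and> (\<lambda>n. (real (cnt D n) - real (cnt A n)) / real n) \<longlonglongrightarrow> 0
           \<and> B - D \<in> dens_sets"
proof -
  define g where "g k = real (cnt B k) - real (cnt A k)" for k
  define M where "M n = Max (g ` {..n})" for n
  define R where "R = {k. k \<ge> 1 \<and> g k > M (k - 1)}"
  have Mge: "g m \<le> M n" if "m \<le> n" for m n
    unfolding M_def using that by (intro Max_ge) auto
  have MSuc: "M (Suc n) = max (M n) (g (Suc n))" for n
    unfolding M_def atMost_Suc by (simp add: max.commute)
  have M0: "M 0 = 0" unfolding M_def g_def by simp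
  have gSuc: "g (Suc n) = g n + (if Suc n \<in> B then 1 else 0) - (if Suc n \<in> A then 1 else 0)" for n
    unfolding g_def cnt_Suc by auto
  have RB: "R \<subseteq> B"
  proof
    fix k assume "k \<in> R"
    then obtain n where k: "k = Suc n" "g (Suc n) > M n" unfolding R_def
      by (metis (mono_tags, lifting) Suc_diff_1 diff_Suc_1 less_eq_Suc_le mem_Collect_eq One_nat_def)
    have "g n \<le> M n" using Mge by auto
    thus "k \<in> B" using k gSuc[of n] by (auto split: if_splits)
  qed
  have cntR: "real (cnt R n) = M n" for n
  proof (induction n)
    case 0 then show ?case using M0 by simp
  next
    case (Suc n)
    have gn: "g n \<le> M n" using Mge by auto
    have mem: "Suc n \<in> R \<longleftrightarrow> g (Suc n) > M n" unfolding R_def by auto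
    show ?case
    proof (cases "g (Suc n) > M n")
      case True
      have "g (Suc n) \<le> M n + 1" using gn gSuc[of n] by (auto split: if_splits)
      moreover have "g (Suc n) \<ge> M n + 1"
      proof -
        have "g (Suc n) - M n > 0" using True by simp
        have "\<exists>z::int. g (Suc n) - M n = of_int z"
        proof -
          have "\<exists>z::int. g m = of_int z" for m unfolding g_def
            by (intro exI[of _ "int (cnt B m) - int (cnt A m)"]) simp
          moreover have "\<exists>z::int. M m = of_int z" for m
          proof -
            have "M m \<in> g ` {..m}" unfolding M_def by (intro Max_in) auto
            then obtain j where "M m = g j" by auto
            thus ?thesis unfolding g_def
              by (intro exI[of _ "int (cnt B j) - int (cnt A j)"]) simp
          qed
          ultimately obtain a b :: int where "g (Suc n) = of_int a" "M n = of_int b" by metis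
          thus ?thesis by (intro exI[of _ "a - b"]) simp
        qed
        then obtain z :: int where z: "g (Suc n) - M n = of_int z" by auto
        with True have "z \<ge> 1" by linarith
        with z show ?thesis by linarith
      qed
      ultimately have "g (Suc n) = M n + 1" by simp
      thus ?thesis using True mem Suc MSuc[of n] cnt_Suc[of R n] by auto
    next
      case False
      thus ?thesis using mem Suc MSuc[of n] cnt_Suc[of R n] by auto
    qed
  qed
  define D where "D = B - R"
  have ABD: "A \<inter> B \<subseteq> D"
  proof
    fix k assume k: "k \<in> A \<inter> B"
    have "k \<notin> R"
    proof
      assume "k \<in> R"
      then obtain n where kn: "k = Suc n" "g (Suc n) > M n" unfolding R_def
        by (metis (mono_tags, lifting) Suc_diff_1 diff_Suc_1 less_eq_Suc_le mem_Collect_eq One_nat_def)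
      have "g n \<le> M n" using Mge by auto
      thus False using kn k gSuc[of n] by auto
    qed
    thus "k \<in> D" using k D_def by auto
  qed
  have lim: "(\<lambda>n. M n / real n) \<longlonglongrightarrow> c"
    unfolding M_def using max_lim[of g c] assms(3,4) unfolding g_def by simp
  have cD: "real (cnt D n) = real (cnt B n) - M n" for n
    unfolding D_def using cnt_mono_set[OF RB, of n] cnt_le[OF RB, of n] cntR[of n] by simp
  have "(\<lambda>n. g n / real n - M n / real n) \<longlonglongrightarrow> c - c"
    using assms(3) lim unfolding g_def by (intro tendsto_diff) auto
  moreover have "(\<lambda>n. g n / real n - M n / real n) = (\<lambda>n. (real (cnt D n) - real (cnt A n)) / real n)"
    by (rule ext) (simp add: cD g_def diff_divide_distrib)
  ultimately have L0: "(\<lambda>n. (real (cnt D n) - real (cnt A n)) / real n) \<longlonglongrightarrow> 0" by simp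
  have BD: "B - D = R" using RB D_def by auto
  have "B - D \<in> dens_sets"
    unfolding dens_sets_def BD using RB assms(2) lim cntR by auto
  show ?thesis using ABD L0 \<open>B - D \<in> dens_sets\<close> D_def by auto
qed

end
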